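(* Let $(\mathcal{M},\mathcal{L})$ be a regular symplectic pair with $\mathcal{M},\mathcal{L}\in\mathbb{C}^{2n\times2n}$. If $\mathcal{M}=\mathcal{L}W$ for some nonsingular $W\in\mathbb{C}^{2n\times2n}$, then both $\mathcal{M}$ and $\mathcal{L}$ are invertible.
   Context: $\mathcal{J}=\begin{bmatrix}0&I_n\\-I_n&0\end{bmatrix}$. The pair $(\mathcal{M},\mathcal{L})$ is symplectic if $\mathcal{M}\mathcal{J}\mathcal{M}^H=\mathcal{L}\mathcal{J}\mathcal{L}^H$ and regular if $\det(\mathcal{M}-\lambda\mathcal{L})\ne0$ for some $\lambda\in\mathbb{C}$. *)

theory Defs
  imports "HOL-Analysis.Analysis"
begin

text \<open>Square matrices of size 2n are indexed by the sum type 'n + 'n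
  (first block = Inl indices, second block = Inr indices), with n = CARD('n).\<close>

definition conj_transpose :: "complex^'m^'k \<Rightarrow> complex^'k^'m" where
  "conj_transpose A = (\<chi> i j. cnj (A $ j $ i))"

definition symplJ :: "complex^('n::finite + 'n)^('n + 'n)" where
  "symplJ = (\<chi> i j. (case (i, j) of
      (Inl a, Inr b) \<Rightarrow> (if a = b then 1 else 0)
    | (Inr a, Inl b) \<Rightarrow> (if a = b then -1 else 0)
    | _ \<Rightarrow> 0))"

definition symplectic_pair :: "complex^('n::finite + 'n)^('n + 'n) \<Rightarrow> complex^('n + 'n)^('n + 'n) \<Rightarrow> bool" where
  "symplectic_pair M L \<longleftrightarrow> M ** symplJ ** conj_transpose M = L ** symplJ ** conj_transpose L"

definition regular_pair :: "complex^'m^'m \<Rightarrow> complex^'m^'m \<Rightarrow> bool" where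
  "regular_pair M L \<longleftrightarrow> (\<exists>z::complex. det (M - (\<chi> i j. z * L $ i $ j)) \<noteq> 0)"

end

theory Submission
  imports Defs
begin

lemma aux0: fixes L :: "complex^'m^'m"
  shows "L ** mat z = (\<chi> i j. z * L $ i $ j)"
  unfolding matrix_matrix_mult_def mat_def
  by (auto simp: vec_eq_iff if_distrib if_distribR sum.delta'[OF finite] mult.commute cong: if_cong)

lemma aux1: fixes L W B :: "complex^'m^'m"
  shows "L ** (W - B) = L ** W - L ** B"
  by (simp add: vec_eq_iff matrix_matrix_mult_def sum_subtractf[symmetric] right_diff_distrib)

lemma aux: fixes L W :: "complex^'m^'m"
  shows "L ** W - (\<chi> i j. z * L $ i $ j) = L ** (W - mat z)"
  by (simp add: aux0 aux1)

theorem lemma2p5: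
  fixes M L W :: "complex^('n::finite + 'n)^('n + 'n)"
  assumes "regular_pair M L"
    and "symplectic_pair M L"
    and "invertible W"
    and "M = L ** W"
  shows "invertible M \<and> invertible L"
proof -
  obtain z where "det (M - (\<chi> i j. z * L $ i $ j)) \<noteq> 0"
    using assms(1) unfolding regular_pair_def by blast
  hence "det L * det (W - mat z) \<noteq> 0" using aux[of L W z] assms(4) by (simp add: det_mul)
  hence L: "invertible L" by (simp add: invertible_det_nz)
  hence "invertible M" using assms(3,4) invertible_mult by blast
  with L show ?thesis by simp
qed

end
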